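(* Let $V = k[[t]]$ be the formal power series ring over a field $k$, and set $R = k[[t^3, t^8, t^{13}]]$ and $S = k[[t^3, t^5]]$, subrings of $V$. Then $R$ is strictly closed in $S$, but $R$ is not strictly closed in $V$.
   Context: For an extension of commutative rings $R \subseteq S$, the strict closure of $R$ in $S$ is $R^* = \{\alpha \in S \mid \alpha\otimes 1 = 1\otimes \alpha \text{ in } S\otimes_R S\}$; $R$ is strictly closed in $S$ if $R=R^*$. *)

theory Defs
  imports "HOL-Computational_Algebra.Formal_Power_Series"
begin

text \<open>Elements of the free abelian group on S \<times> S are represented as integer-valued
  functions on pairs (all elements produced below have finite support).
  The tensor product S \<otimes>_R S is the quotient of this free abelian group by the
  subgroup generated by the bilinearity and R-balancedness relations.\<close>

definition basis_elt :: "'a \<times> 'a \<Rightarrow> ('a \<times> 'a \<Rightarrow> int)" where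
  "basis_elt p = (\<lambda>q. if q = p then 1 else 0)"

inductive_set tensor_rel :: "'a::comm_ring_1 set \<Rightarrow> 'a set \<Rightarrow> ('a \<times> 'a \<Rightarrow> int) set"
  for R :: "'a set" and S :: "'a set" where
  zero: "(\<lambda>_. 0) \<in> tensor_rel R S"
| add_left: "\<lbrakk>s \<in> S; s' \<in> S; u \<in> S\<rbrakk> \<Longrightarrow>
     (\<lambda>q. basis_elt (s + s', u) q - basis_elt (s, u) q - basis_elt (s', u) q) \<in> tensor_rel R S"
| add_right: "\<lbrakk>s \<in> S; u \<in> S; u' \<in> S\<rbrakk> \<Longrightarrow>
     (\<lambda>q. basis_elt (s, u + u') q - basis_elt (s, u) q - basis_elt (s, u') q) \<in> tensor_rel R S"
| balanced: "\<lbrakk>r \<in> R; s \<in> S; u \<in> S\<rbrakk> \<Longrightarrow>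
     (\<lambda>q. basis_elt (r * s, u) q - basis_elt (s, r * u) q) \<in> tensor_rel R S"
| plus: "\<lbrakk>x \<in> tensor_rel R S; y \<in> tensor_rel R S\<rbrakk> \<Longrightarrow> (\<lambda>q. x q + y q) \<in> tensor_rel R S"
| neg: "x \<in> tensor_rel R S \<Longrightarrow> (\<lambda>q. - x q) \<in> tensor_rel R S"

text \<open>\<alpha> \<otimes> 1 = 1 \<otimes> \<alpha> in S \<otimes>_R S\<close>
definition tensor_sym :: "'a::comm_ring_1 set \<Rightarrow> 'a set \<Rightarrow> 'a \<Rightarrow> bool" where
  "tensor_sym R S \<alpha> \<longleftrightarrow> (\<lambda>q. basis_elt (\<alpha>, 1) q - basis_elt (1, \<alpha>) q) \<in> tensor_rel R S"

definition strict_closure :: "'a::comm_ring_1 set \<Rightarrow> 'a set \<Rightarrow> 'a set" where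
  "strict_closure R S = {\<alpha> \<in> S. tensor_sym R S \<alpha>}"

definition strictly_closed :: "'a::comm_ring_1 set \<Rightarrow> 'a set \<Rightarrow> bool" where
  "strictly_closed R S \<longleftrightarrow> strict_closure R S = R"

text \<open>k[[t^{a_1},...,t^{a_m}]] is the (t-adically closed) subring of k[[t]] of power series
  whose support lies in the numerical semigroup generated by a_1,...,a_m.\<close>
definition semigroup_fps :: "nat set \<Rightarrow> 'a::field fps set" where
  "semigroup_fps G = {f. \<forall>n. fps_nth f n \<noteq> 0 \<longrightarrow> n \<in> G}"

definition R_3_8_13 :: "'a::field fps set" where
  "R_3_8_13 = semigroup_fps {3*a + 8*b + 13*c | a b c. True}"

definition S_3_5 :: "'a::field fps set" where
  "S_3_5 = semigroup_fps {3*a + 5*b | a b. True}"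

end

theory Submission
  imports Defs
begin


lemma Rle10: "(n::nat) \<le> 10 \<Longrightarrow> (\<exists>a b c::nat. n = 3*a + 8*b + 13*c) \<longleftrightarrow> n \<in> {0,3,6,8,9}"
proof
  assume n: "n \<le> 10" and "\<exists>a b c::nat. n = 3*a + 8*b + 13*c"
  then obtain a b c :: nat where e: "n = 3*a + 8*b + 13*c" by blast
  have "c = 0" "b \<le> 1" "a \<le> 3" using n e by linarith+
  then have "c = 0" "b \<in> {0,1}" "a \<in> {0,1,2,3}" by auto
  then show "n \<in> {0,3,6,8,9}" using e n by auto
next
  assume "n \<in> {0,3,6,8,9}"
  then show "\<exists>a b c::nat. n = 3*a + 8*b + 13*c"
  proof (elim insertE emptyE)
    assume "n = 0" then show ?thesis by (rule_tac x=0 in exI, auto)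
  next
    assume "n = 3" then show ?thesis by (rule_tac x=1 in exI, rule_tac x=0 in exI, auto)
  next
    assume "n = 6" then show ?thesis by (rule_tac x=2 in exI, rule_tac x=0 in exI, auto)
  next
    assume "n = 8" then show ?thesis by (rule_tac x=0 in exI, rule_tac x=1 in exI, auto)
  next
    assume "n = 9" then show ?thesis by (rule_tac x=3 in exI, rule_tac x=0 in exI, auto)
  qed
qed

lemma Sle10: "(n::nat) \<le> 10 \<Longrightarrow> (\<exists>a b::nat. n = 3*a + 5*b) \<Longrightarrow> n \<in> {0,3,5,6,8,9,10}"
proof -
  assume n: "n \<le> 10" and "\<exists>a b::nat. n = 3*a + 5*b"
  then obtain a b :: nat where e: "n = 3*a + 5*b" by blast
  have "b \<le> 2" "a \<le> 3" using n e by linarith+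
  then have "b \<in> {0,1,2}" "a \<in> {0,1,2,3}" by auto
  then show "n \<in> {0,3,5,6,8,9,10}" using e n by auto
qed

lemma Rge11: "(n::nat) \<ge> 11 \<Longrightarrow> \<exists>a b c::nat. n = 3*a + 8*b + 13*c"
proof -
  assume n: "n \<ge> 11"
  have "n mod 3 = 0 \<or> n mod 3 = 1 \<or> n mod 3 = 2" by linarith
  moreover have "n mod 3 = 0 \<Longrightarrow> n = 3*(n div 3) + 8*0 + 13*0" using div_mult_mod_eq[of n 3] by linarith
  moreover have "n mod 3 = 2 \<Longrightarrow> n = 3*(n div 3 - 2) + 8*1 + 13*0" using n div_mult_mod_eq[of n 3] by arith
  moreover have "n mod 3 = 1 \<Longrightarrow> n = 3*(n div 3 - 4) + 8*0 + 13*1"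
  proof -
    assume m: "n mod 3 = 1"
    have "n \<noteq> 11" "n \<noteq> 12" using m by auto
    then have "n \<ge> 13" using n by linarith
    then show ?thesis using m div_mult_mod_eq[of n 3] by arith
  qed
  ultimately show ?thesis by metis
qed


lemma Rsg_iff: "n \<in> {3*a + 8*b + 13*c | a b c. True} \<longleftrightarrow> (\<exists>a b c::nat. n = 3*a + 8*b + 13*c)"
  by auto

lemma Ssg_iff: "n \<in> {3*a + 5*b | a b. True} \<longleftrightarrow> (\<exists>a b::nat. n = 3*a + 5*b)"
  by auto

definition Phi :: "('a \<times> 'a \<Rightarrow> 'k::field) \<Rightarrow> ('a \<times> 'a \<Rightarrow> int) \<Rightarrow> 'k" where
  "Phi B x = (\<Sum>q\<in>{q. x q \<noteq> 0}. of_int (x q) * B q)"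

lemma Phi_sup:
  assumes "finite A" "{q. x q \<noteq> 0} \<subseteq> A"
  shows "Phi B x = (\<Sum>q\<in>A. of_int (x q) * B q)"
  unfolding Phi_def
  by (rule sum.mono_neutral_left) (use assms in auto)

lemma Phi_diff:
  assumes "finite {q. x q \<noteq> 0}" "finite {q. y q \<noteq> 0}"
  shows "Phi B (\<lambda>q. x q - y q) = Phi B x - Phi B y"
proof -
  let ?A = "{q. x q \<noteq> 0} \<union> {q. y q \<noteq> 0}"
  have fA: "finite ?A" using assms by simp
  have "Phi B (\<lambda>q. x q - y q) = (\<Sum>q\<in>?A. of_int (x q - y q) * B q)"
    by (rule Phi_sup) (use fA in auto)
  also have "\<dots> = (\<Sum>q\<in>?A. of_int (x q) * B q) - (\<Sum>q\<in>?A. of_int (y q) * B q)"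
    by (simp add: sum_subtractf left_diff_distrib)
  also have "(\<Sum>q\<in>?A. of_int (x q) * B q) = Phi B x"
    by (rule Phi_sup[symmetric]) (use fA in auto)
  also have "(\<Sum>q\<in>?A. of_int (y q) * B q) = Phi B y"
    by (rule Phi_sup[symmetric]) (use fA in auto)
  finally show ?thesis .
qed

lemma Phi_plus:
  assumes "finite {q. x q \<noteq> 0}" "finite {q. y q \<noteq> 0}"
  shows "Phi B (\<lambda>q. x q + y q) = Phi B x + Phi B y"
proof -
  let ?A = "{q. x q \<noteq> 0} \<union> {q. y q \<noteq> 0}"
  have fA: "finite ?A" using assms by simp
  have "Phi B (\<lambda>q. x q + y q) = (\<Sum>q\<in>?A. of_int (x q + y q) * B q)"
    by (rule Phi_sup) (use fA in auto)
  also have "\<dots> = (\<Sum>q\<in>?A. of_int (x q) * B q) + (\<Sum>q\<in>?A. of_int (y q) * B q)"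
    by (simp add: sum.distrib distrib_right)
  also have "(\<Sum>q\<in>?A. of_int (x q) * B q) = Phi B x"
    by (rule Phi_sup[symmetric]) (use fA in auto)
  also have "(\<Sum>q\<in>?A. of_int (y q) * B q) = Phi B y"
    by (rule Phi_sup[symmetric]) (use fA in auto)
  finally show ?thesis .
qed

lemma Phi_neg:
  shows "Phi B (\<lambda>q. - x q) = - Phi B x"
  unfolding Phi_def by (simp add: sum_negf)

lemma fin_basis: "finite {q. basis_elt p q \<noteq> 0}"
  by (rule finite_subset[of _ "{p}"]) (auto simp: basis_elt_def)

lemma Phi_basis: "Phi B (basis_elt p) = B p"
proof -
  have "{q. basis_elt p q \<noteq> 0} = {p}" by (auto simp: basis_elt_def)
  then show ?thesis unfolding Phi_def by (simp add: basis_elt_def)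
qed

lemma fin_diff: "finite {q. x q \<noteq> 0} \<Longrightarrow> finite {q. y q \<noteq> 0} \<Longrightarrow> finite {q. (x q::int) - y q \<noteq> 0}"
  by (rule finite_subset[of _ "{q. x q \<noteq> 0} \<union> {q. y q \<noteq> 0}"]) auto

lemma fin_plus: "finite {q. x q \<noteq> 0} \<Longrightarrow> finite {q. y q \<noteq> 0} \<Longrightarrow> finite {q. (x q::int) + y q \<noteq> 0}"
  by (rule finite_subset[of _ "{q. x q \<noteq> 0} \<union> {q. y q \<noteq> 0}"]) auto

lemma tensor_rel_inv:
  assumes x: "x \<in> tensor_rel R S"
    and addl: "\<And>s s' u. s \<in> S \<Longrightarrow> s' \<in> S \<Longrightarrow> u \<in> S \<Longrightarrow> B (s + s', u) = B (s, u) + B (s', u)"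
    and addr: "\<And>s u u'. s \<in> S \<Longrightarrow> u \<in> S \<Longrightarrow> u' \<in> S \<Longrightarrow> B (s, u + u') = B (s, u) + B (s, u')"
    and bal: "\<And>r s u. r \<in> R \<Longrightarrow> s \<in> S \<Longrightarrow> u \<in> S \<Longrightarrow> B (r * s, u) = B (s, r * u)"
  shows "finite {q. x q \<noteq> 0} \<and> Phi B x = 0"
  using x
proof (induction rule: tensor_rel.induct)
  case zero
  then show ?case by (simp add: Phi_def)
next
  case (add_left s s' u)
  show ?case
    by (rule conjI, (intro fin_diff fin_basis)?,
        simp only: Phi_diff fin_diff fin_basis Phi_basis, simp add: addl[OF add_left])
next
  case (add_right s u u')
  show ?case
    by (rule conjI, (intro fin_diff fin_basis)?,
        simp only: Phi_diff fin_diff fin_basis Phi_basis, simp add: addr[OF add_right])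
next
  case (balanced r s u)
  show ?case
    by (rule conjI, (intro fin_diff fin_basis)?,
        simp only: Phi_diff fin_diff fin_basis Phi_basis, simp add: bal[OF balanced])
next
  case (plus x y)
  then show ?case by (simp add: fin_plus Phi_plus)
next
  case (neg x)
  then show ?case by (simp add: Phi_neg)
qed

lemma R_sub_S: "(R_3_8_13 :: 'k::field fps set) \<subseteq> S_3_5"
proof
  fix f :: "'k fps" assume "f \<in> R_3_8_13"
  then have h: "\<forall>n. (fps_nth f n) \<noteq> 0 \<longrightarrow> (\<exists>a b c::nat. n = 3*a + 8*b + 13*c)"
    by (simp add: R_3_8_13_def semigroup_fps_def Rsg_iff)
  have "\<forall>n. (fps_nth f n) \<noteq> 0 \<longrightarrow> (\<exists>a b::nat. n = 3*a + 5*b)"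
  proof (intro allI impI)
    fix n assume "(fps_nth f n) \<noteq> 0"
    then obtain a b c :: nat where "n = 3*a + 8*b + 13*c" using h by blast
    then have "n = 3*(a+b+c) + 5*(b+2*c)" by simp
    then show "\<exists>a b::nat. n = 3*a + 5*b" by blast
  qed
  then show "f \<in> S_3_5" by (simp add: S_3_5_def semigroup_fps_def Ssg_iff)
qed

lemma mult_nth_d:
  fixes r s :: "'k::field fps"
  assumes r: "r \<in> R_3_8_13" and s: "s \<in> S_3_5" and d: "m = 5 \<or> m = 10"
  shows "(fps_nth (r * s) m) = (fps_nth r 0) * (fps_nth s m)"
proof -
  have hr: "\<And>n. (fps_nth r n) \<noteq> 0 \<Longrightarrow> (\<exists>a b c::nat. n = 3*a + 8*b + 13*c)"
    using r by (simp add: R_3_8_13_def semigroup_fps_def Rsg_iff)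
  have hs: "\<And>n. (fps_nth s n) \<noteq> 0 \<Longrightarrow> (\<exists>a b::nat. n = 3*a + 5*b)"
    using s by (simp add: S_3_5_def semigroup_fps_def Ssg_iff)
  have z: "(fps_nth r i) * (fps_nth s (m - i)) = 0" if i: "i \<in> {Suc 0..m}" for i
  proof (rule ccontr)
    assume "(fps_nth r i) * (fps_nth s (m - i)) \<noteq> 0"
    then have "(fps_nth r i) \<noteq> 0" "(fps_nth s (m - i)) \<noteq> 0" by auto
    then have "i \<in> {0,3,6,8,9}" "m - i \<in> {0,3,5,6,8,9,10}"
      using hr hs Rle10[of i] Sle10[of "m - i"] i d by auto
    then show False using i d by auto
  qed
  have "(fps_nth (r * s) m) = (\<Sum>i=0..m. (fps_nth r i) * (fps_nth s (m - i)))" by (rule fps_mult_nth)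
  also have "\<dots> = (fps_nth r 0) * (fps_nth s (m - 0)) + (\<Sum>i=Suc 0..m. (fps_nth r i) * (fps_nth s (m - i)))"
    by (rule sum.atLeast_Suc_atMost) simp
  also have "(\<Sum>i=Suc 0..m. (fps_nth r i) * (fps_nth s (m - i))) = 0"
    using z by (intro sum.neutral) blast
  finally show ?thesis by simp
qed

lemma one_mem: "(1::'k::field fps) \<in> S_3_5"
  unfolding S_3_5_def semigroup_fps_def Ssg_iff
  by (auto simp: fps_one_nth)

lemma part1: "strictly_closed (R_3_8_13 :: 'k::field fps set) S_3_5"
  unfolding strictly_closed_def strict_closure_def
proof (intro equalityI subsetI)
  fix \<alpha> :: "'k fps" assume "\<alpha> \<in> {\<alpha> \<in> S_3_5. tensor_sym R_3_8_13 S_3_5 \<alpha>}"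
  then have aS: "\<alpha> \<in> S_3_5" and ts: "tensor_sym R_3_8_13 S_3_5 \<alpha>" by auto
  show "\<alpha> \<in> R_3_8_13"
  proof (rule ccontr)
    assume nR: "\<alpha> \<notin> R_3_8_13"
    then obtain n where an: "(fps_nth \<alpha> n) \<noteq> 0" and nn: "\<not>(\<exists>a b c::nat. n = 3*a + 8*b + 13*c)"
      by (auto simp: R_3_8_13_def semigroup_fps_def Rsg_iff)
    have nS: "\<exists>a b::nat. n = 3*a + 5*b"
      using aS an by (simp add: S_3_5_def semigroup_fps_def Ssg_iff)
    have "\<not> 11 \<le> n" using nn Rge11[of n] by blast
    then have "n \<le> 10" by simp
    then have d: "n = 5 \<or> n = 10"
      using Sle10[OF _ nS] Rle10[of n] nn by auto
    define B :: "'k fps \<times> 'k fps \<Rightarrow> 'k" where "B = (\<lambda>(f, g). (fps_nth f n) * (fps_nth g 0))"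
    have inv: "finite {q. (\<lambda>q. basis_elt (\<alpha>, 1) q - basis_elt (1, \<alpha>) q) q \<noteq> 0} \<and>
        Phi B (\<lambda>q. basis_elt (\<alpha>, 1) q - basis_elt (1, \<alpha>) q) = 0"
    proof (rule tensor_rel_inv[where R = R_3_8_13 and S = S_3_5])
      show "(\<lambda>q. basis_elt (\<alpha>, 1) q - basis_elt (1, \<alpha>) q) \<in> tensor_rel R_3_8_13 S_3_5"
        using ts by (simp add: tensor_sym_def)
    next
      fix s s' u :: "'k fps" show "B (s + s', u) = B (s, u) + B (s', u)"
        by (simp add: B_def distrib_right)
    next
      fix s u u' :: "'k fps" show "B (s, u + u') = B (s, u) + B (s, u')"
        by (simp add: B_def distrib_left)
    next
      fix r s u :: "'k fps" assume "r \<in> R_3_8_13" "s \<in> S_3_5" "u \<in> S_3_5"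
      then show "B (r * s, u) = B (s, r * u)"
        using mult_nth_d[of r s n] d by (simp add: B_def)
    qed
    have "Phi B (\<lambda>q. basis_elt (\<alpha>, 1) q - basis_elt (1, \<alpha>) q) = B (\<alpha>, 1) - B (1, \<alpha>)"
      by (simp only: Phi_diff fin_basis Phi_basis)
    also have "\<dots> = (fps_nth \<alpha> n)" using d by (auto simp: B_def)
    finally show False using inv an by simp
  qed
next
  fix r :: "'k fps" assume r: "r \<in> R_3_8_13"
  then have "r \<in> S_3_5" using R_sub_S by blast
  moreover have "tensor_sym R_3_8_13 S_3_5 r"
    using tensor_rel.balanced[where R=R_3_8_13 and S=S_3_5 and r=r and s=1 and u=1, OF r one_mem one_mem]
    by (simp add: tensor_sym_def)
  ultimately show "r \<in> {\<alpha> \<in> S_3_5. tensor_sym R_3_8_13 S_3_5 \<alpha>}" by simp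
qed


lemma X_in_R: "(\<exists>a b c::nat. k = 3*a + 8*b + 13*c) \<Longrightarrow> (fps_X ^ k :: 'k::field fps) \<in> R_3_8_13"
  unfolding R_3_8_13_def semigroup_fps_def Rsg_iff by auto

lemma X3_R: "(fps_X ^ 3 :: 'k::field fps) \<in> R_3_8_13"
  by (rule X_in_R) (rule exI[of _ 1], rule exI[of _ 0], rule exI[of _ 0], simp)

lemma X8_R: "(fps_X ^ 8 :: 'k::field fps) \<in> R_3_8_13"
  by (rule X_in_R) (rule exI[of _ 0], rule exI[of _ 1], rule exI[of _ 0], simp)

lemma X10_notR: "(fps_X ^ 10 :: 'k::field fps) \<notin> R_3_8_13"
proof
  assume "(fps_X ^ 10 :: 'k fps) \<in> R_3_8_13"
  then have h: "\<forall>n. fps_nth (fps_X ^ 10 :: 'k fps) n \<noteq> 0 \<longrightarrow> (\<exists>a b c::nat. n = 3*a + 8*b + 13*c)"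
    unfolding R_3_8_13_def semigroup_fps_def Rsg_iff by blast
  have "fps_nth (fps_X ^ 10 :: 'k fps) 10 \<noteq> 0" by (simp only: fps_X_power_nth) simp
  then have "\<exists>a b c::nat. (10::nat) = 3*a + 8*b + 13*c" using h by blast
  then show False using Rle10[of 10] by simp
qed

lemma X10_sym: "tensor_sym (R_3_8_13 :: 'k::field fps set) UNIV (fps_X ^ 10)"
proof -
  let ?R = "R_3_8_13 :: 'k fps set"
  let ?X = "fps_X :: 'k fps"
  have m1: "?X^8 * ?X^2 = ?X^10" "?X^3 * ?X^2 = ?X^5" "?X^3 * ?X^5 = ?X^8"
    unfolding power_add[symmetric] by simp_all
  have e1: "(\<lambda>q. basis_elt (?X^10, 1) q - basis_elt (?X^2, ?X^8) q) \<in> tensor_rel ?R UNIV"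
    using tensor_rel.balanced[where R = ?R and S = UNIV and r = "?X^8" and s = "?X^2" and u = 1, OF X8_R]
    by (simp only: m1 mult_1_right mult_1_left UNIV_I simp_thms)
  have e2: "(\<lambda>q. basis_elt (?X^5, ?X^5) q - basis_elt (?X^2, ?X^8) q) \<in> tensor_rel ?R UNIV"
    using tensor_rel.balanced[where R = ?R and S = UNIV and r = "?X^3" and s = "?X^2" and u = "?X^5", OF X3_R]
    by (simp only: m1 mult_1_right mult_1_left UNIV_I simp_thms)
  have e3: "(\<lambda>q. basis_elt (?X^8, ?X^2) q - basis_elt (?X^5, ?X^5) q) \<in> tensor_rel ?R UNIV"
    using tensor_rel.balanced[where R = ?R and S = UNIV and r = "?X^3" and s = "?X^5" and u = "?X^2", OF X3_R]
    by (simp only: m1 mult_1_right mult_1_left UNIV_I simp_thms)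
  have e4: "(\<lambda>q. basis_elt (?X^8, ?X^2) q - basis_elt (1, ?X^10) q) \<in> tensor_rel ?R UNIV"
    using tensor_rel.balanced[where R = ?R and S = UNIV and r = "?X^8" and s = 1 and u = "?X^2", OF X8_R]
    by (simp only: m1 mult_1_right mult_1_left UNIV_I simp_thms)
  have n2: "(\<lambda>q. - (basis_elt (?X^5, ?X^5) q - basis_elt (?X^2, ?X^8) q)) \<in> tensor_rel ?R UNIV"
    by (rule tensor_rel.neg[OF e2])
  have n3: "(\<lambda>q. - (basis_elt (?X^8, ?X^2) q - basis_elt (?X^5, ?X^5) q)) \<in> tensor_rel ?R UNIV"
    by (rule tensor_rel.neg[OF e3])
  have s12: "(\<lambda>q. (basis_elt (?X^10, 1) q - basis_elt (?X^2, ?X^8) q) + - (basis_elt (?X^5, ?X^5) q - basis_elt (?X^2, ?X^8) q)) \<in> tensor_rel ?R UNIV"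
    by (rule tensor_rel.plus[OF e1 n2])
  have s123: "(\<lambda>q. ((basis_elt (?X^10, 1) q - basis_elt (?X^2, ?X^8) q) + - (basis_elt (?X^5, ?X^5) q - basis_elt (?X^2, ?X^8) q)) + - (basis_elt (?X^8, ?X^2) q - basis_elt (?X^5, ?X^5) q)) \<in> tensor_rel ?R UNIV"
    by (rule tensor_rel.plus[OF s12 n3])
  have s1234: "(\<lambda>q. (((basis_elt (?X^10, 1) q - basis_elt (?X^2, ?X^8) q) + - (basis_elt (?X^5, ?X^5) q - basis_elt (?X^2, ?X^8) q)) + - (basis_elt (?X^8, ?X^2) q - basis_elt (?X^5, ?X^5) q)) + (basis_elt (?X^8, ?X^2) q - basis_elt (1, ?X^10) q)) \<in> tensor_rel ?R UNIV"
    by (rule tensor_rel.plus[OF s123 e4])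
  have eq: "(\<lambda>q. (((basis_elt (?X^10, 1) q - basis_elt (?X^2, ?X^8) q) + - (basis_elt (?X^5, ?X^5) q - basis_elt (?X^2, ?X^8) q)) + - (basis_elt (?X^8, ?X^2) q - basis_elt (?X^5, ?X^5) q)) + (basis_elt (?X^8, ?X^2) q - basis_elt (1, ?X^10) q))
      = (\<lambda>q. basis_elt (?X^10, 1) q - basis_elt (1, ?X^10) q)"
    by (rule ext) linarith
  show ?thesis using s1234 unfolding eq tensor_sym_def .
qed

lemma part2: "\<not> strictly_closed (R_3_8_13 :: 'k::field fps set) UNIV"
proof
  assume "strictly_closed (R_3_8_13 :: 'k::field fps set) UNIV"
  then have "strict_closure (R_3_8_13 :: 'k::field fps set) UNIV = R_3_8_13"
    by (simp add: strictly_closed_def)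
  moreover have "(fps_X ^ 10 :: 'k fps) \<in> strict_closure R_3_8_13 UNIV"
    using X10_sym by (simp add: strict_closure_def)
  ultimately show False using X10_notR by blast
qed

theorem mainTheorem5:
  shows "strictly_closed (R_3_8_13 :: 'k::field fps set) S_3_5
         \<and> \<not> strictly_closed (R_3_8_13 :: 'k::field fps set) UNIV"
  using part1 part2 by blast

end
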